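(* Let $r\ge1$, $n$ be integers and let $\sigma,\sigma':\mathbb{Z}_n\to\{0,1\}$ be a temporally periodic pair. Let $[a,b],[c,d]\in B(\sigma')$ be adjacent blocks with $c=b+1$. If $\varphi_{\sigma,\sigma'}([a,b])=[a',b']$ and $\varphi_{\sigma,\sigma'}([c,d])=[c',d']$, then $[a',b']$ and $[c',d']$ are adjacent and $c'=b'+1$.
   Context: Cells are elements of $\mathbb{Z}_n$, arithmetic mod $n$; $[a,b]$ denotes the cyclic interval $a,\dots,b$. The majority rule with radius $r$: $\mathrm{maj}_r(\sigma)(i)=0$ if among the cells of $[i-r,i+r]$ strictly more have value $0$ than $1$ under $\sigma$, and $=1$ otherwise. A temporally periodic pair is a pair with $\mathrm{maj}_r(\sigma)=\sigma'$ and $\mathrm{maj}_r(\sigma')=\sigma$. For $\beta\in\{0,1\}$, $B^\beta(\sigma)$ is the set of cell intervals $[i,j]$ with $\sigma(k)=\beta$ for all $k\in[i,j]$ and $\sigma(i-1)=\sigma(j+1)=1-\beta$; $B(\sigma)=B^0(\sigma)\cup B^1(\sigma)$. For $[i,j]\in B(\sigma')$, $f^{\leftarrow}_{\sigma,\sigma'}([i,j])$ is the block of $B(\sigma)$ containing cell $j-r$ and $f^{\rightarrow}_{\sigma,\sigma'}([i,j])$ is the block of $B(\sigma)$ containing cell $i+r$. For blocks $X=[x,y]$, $X'=[x',y']$, the block interval $[X,X']_{B(\sigma)}$ is the sequence of blocks of $B(\sigma)$ contained in $[x,y']$; the number of blocks in $[f^{\leftarrow}_{\sigma,\sigma'}([i,j]),f^{\rightarrow}_{\sigma,\sigma'}([i,j])]_{B(\sigma)}$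 is always odd, and the alignment mapping $\varphi_{\sigma,\sigma'}([i,j])$ is its middle block. *)

theory Defs
  imports Main
begin

text \<open>Cells of Z_n are represented by integers taken modulo n (canonical
representatives in {0..<n}); a configuration is a function int => nat whose
value at a cell i is sigma (i mod n).\<close>

definition cyc_interval :: "int \<Rightarrow> int \<Rightarrow> int \<Rightarrow> int set" where
  "cyc_interval n a b = {(a + k) mod n | k. 0 \<le> k \<and> k \<le> (b - a) mod n}"

definition maj :: "nat \<Rightarrow> int \<Rightarrow> (int \<Rightarrow> nat) \<Rightarrow> int \<Rightarrow> nat" where
  "maj r n \<sigma> i =
     (if card {k \<in> {- int r .. int r}. \<sigma> ((i + k) mod n) = 0}
         > card {k \<in> {- int r .. int r}. \<sigma> ((i + k) mod n) = 1}
      then 0 else 1)"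

definition temporally_periodic_pair ::
  "nat \<Rightarrow> int \<Rightarrow> (int \<Rightarrow> nat) \<Rightarrow> (int \<Rightarrow> nat) \<Rightarrow> bool" where
  "temporally_periodic_pair r n \<sigma> \<sigma>' \<longleftrightarrow>
     (\<forall>i \<in> {0..<n}. maj r n \<sigma> i = \<sigma>' i) \<and> (\<forall>i \<in> {0..<n}. maj r n \<sigma>' i = \<sigma> i)"

definition is_block :: "int \<Rightarrow> (int \<Rightarrow> nat) \<Rightarrow> nat \<Rightarrow> int \<times> int \<Rightarrow> bool" where
  "is_block n \<sigma> \<beta> X \<longleftrightarrow>
     (let i = fst X; j = snd X in
       i \<in> {0..<n} \<and> j \<in> {0..<n} \<and>
       (\<forall>k \<in> cyc_interval n i j. \<sigma> k = \<beta>) \<and>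
       \<sigma> ((i - 1) mod n) = 1 - \<beta> \<and> \<sigma> ((j + 1) mod n) = 1 - \<beta>)"

definition blocks :: "int \<Rightarrow> (int \<Rightarrow> nat) \<Rightarrow> (int \<times> int) set" where
  "blocks n \<sigma> = {X. \<exists>\<beta> \<in> {0, 1}. is_block n \<sigma> \<beta> X}"

definition block_containing :: "int \<Rightarrow> (int \<Rightarrow> nat) \<Rightarrow> int \<Rightarrow> int \<times> int" where
  "block_containing n \<sigma> c =
     (THE X. X \<in> blocks n \<sigma> \<and> c mod n \<in> cyc_interval n (fst X) (snd X))"

definition f_left :: "nat \<Rightarrow> int \<Rightarrow> (int \<Rightarrow> nat) \<Rightarrow> int \<times> int \<Rightarrow> int \<times> int" where
  "f_left r n \<sigma> X = block_containing n \<sigma> (snd X - int r)"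

definition f_right :: "nat \<Rightarrow> int \<Rightarrow> (int \<Rightarrow> nat) \<Rightarrow> int \<times> int \<Rightarrow> int \<times> int" where
  "f_right r n \<sigma> X = block_containing n \<sigma> (fst X + int r)"

definition block_interval ::
  "int \<Rightarrow> (int \<Rightarrow> nat) \<Rightarrow> int \<times> int \<Rightarrow> int \<times> int \<Rightarrow> (int \<times> int) set" where
  "block_interval n \<sigma> X X' =
     {Y \<in> blocks n \<sigma>. cyc_interval n (fst Y) (snd Y) \<subseteq> cyc_interval n (fst X) (snd X')}"

text \<open>Middle element of a set of blocks, ordered cyclically starting at cell x.\<close>
definition middle_block :: "int \<Rightarrow> int \<Rightarrow> (int \<times> int) set \<Rightarrow> int \<times> int" where
  "middle_block n x S =
     (THE Z. Z \<in> S \<and>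
        card {W \<in> S. (fst W - x) mod n < (fst Z - x) mod n}
        = card {W \<in> S. (fst W - x) mod n > (fst Z - x) mod n})"

definition alignment :: "nat \<Rightarrow> int \<Rightarrow> (int \<Rightarrow> nat) \<Rightarrow> (int \<Rightarrow> nat) \<Rightarrow> int \<times> int \<Rightarrow> int \<times> int" where
  "alignment r n \<sigma> \<sigma>' X =
     (let L = f_left r n \<sigma> X; R = f_right r n \<sigma> X
      in middle_block n (fst L) (block_interval n \<sigma> L R))"

end

theory Submission
  imports Defs
begin

locale cyc =
  fixes n :: int and \<sigma> :: "int \<Rightarrow> nat"
  assumes n_pos: "n \<ge> 1" and vals: "\<forall>i\<in>{0..<n}. \<sigma> i \<in> {0,1}"
begin

definition sg :: "int \<Rightarrow> nat" where "sg x = \<sigma> (x mod n)"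
definition bd :: "int \<Rightarrow> bool" where "bd x \<longleftrightarrow> sg x \<noteq> sg (x+1)"

lemma sg01: "sg x = 0 \<or> sg x = 1"
proof -
  have "x mod n \<in> {0..<n}" using n_pos by simp
  then show ?thesis using vals unfolding sg_def by auto
qed

lemma sg_per: "sg (x + k*n) = sg x"
  unfolding sg_def by simp

lemma sg_mod: "sg (x mod n) = sg x"
  unfolding sg_def by simp

lemma bd_per: "bd (x + k*n) = bd x"
  unfolding bd_def using sg_per[of x k] sg_per[of "x+1" k] by (simp add: algebra_simps)

lemma const_run_aux: "(\<forall>j. x \<le> j \<and> j < x + int d \<longrightarrow> \<not> bd j) \<Longrightarrow> sg (x + int d) = sg x"
proof (induction d)
  case 0 then show ?case by simp
next
  case (Suc d)
  then have "sg (x + int d) = sg x" by auto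
  moreover have "\<not> bd (x + int d)" using Suc.prems by auto
  ultimately show ?case unfolding bd_def by (simp add: add_ac)
qed

lemma const_run: "x \<le> y \<Longrightarrow> (\<forall>j. x \<le> j \<and> j < y \<longrightarrow> \<not> bd j) \<Longrightarrow> sg y = sg x"
  using const_run_aux[of x "nat (y - x)"] by simp

lemma persist_aux:
  assumes mono: "\<forall>j. x \<le> j \<and> j < y \<and> sg j \<noteq> A \<longrightarrow> sg (j+1) \<noteq> A"
  shows "sg i \<noteq> A \<Longrightarrow> x \<le> i \<Longrightarrow> i + int d \<le> y \<Longrightarrow> sg (i + int d) \<noteq> A"
proof (induction d)
  case 0 then show ?case by simp
next
  case (Suc d)
  then have "sg (i + int d) \<noteq> A" by auto
  then have "sg (i + int d + 1) \<noteq> A" using mono Suc.prems by auto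
  then show ?case by (simp add: add_ac)
qed

lemma persist:
  assumes "\<forall>j. x \<le> j \<and> j < y \<and> sg j \<noteq> A \<longrightarrow> sg (j+1) \<noteq> A"
    and "sg i \<noteq> A" "x \<le> i" "i \<le> i'" "i' \<le> y"
  shows "sg i' \<noteq> A"
  using persist_aux[OF assms(1), of i "nat (i' - i)"] assms by simp

lemma one_bd:
  assumes xy: "x < y" and sx: "sg x = A" and sy: "sg y \<noteq> A"
    and mono: "\<forall>j. x \<le> j \<and> j < y \<and> sg j \<noteq> A \<longrightarrow> sg (j+1) \<noteq> A"
  shows "\<exists>k. x \<le> k \<and> k < y \<and> bd k \<and> (\<forall>j. x \<le> j \<and> j < y \<and> bd j \<longrightarrow> j = k)"
proof -
  define P where "P = (\<lambda>d::nat. sg (x + int d + 1) \<noteq> A)"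
  have ex: "P (nat (y - x - 1))" using sy xy unfolding P_def by simp
  define d where "d = (LEAST d. P d)"
  have Pd: "P d" using LeastI[of P, OF ex] d_def by simp
  have dle: "d \<le> nat (y - x - 1)" using Least_le[of P, OF ex] d_def by simp
  have sd: "sg (x + int d) = A"
  proof (cases d)
    case 0 then show ?thesis using sx by simp
  next
    case (Suc d')
    then have "\<not> P d'" using not_less_Least[of d' P] d_def by simp
    then show ?thesis unfolding P_def using Suc by (simp add: add_ac)
  qed
  define k where "k = x + int d"
  have bk: "bd k" using sd Pd unfolding P_def bd_def k_def by simp
  have rng: "x \<le> k" "k < y" using dle xy unfolding k_def by auto
  have uniq: "j = k" if j: "x \<le> j" "j < y" "bd j" for j
  proof -
    have sjA: "sg j = A"
    proof (rule ccontr)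
      assume "sg j \<noteq> A"
      then have "sg (j+1) \<noteq> A" using mono j by auto
      then have "sg j = sg (j+1)" using \<open>sg j \<noteq> A\<close> sg01[of j] sg01[of "j+1"] sg01[of x] sx by auto
      then show False using j(3) unfolding bd_def by simp
    qed
    have sj1: "sg (j+1) \<noteq> A" using j(3) sjA unfolding bd_def by simp
    have sk1: "sg (k+1) \<noteq> A" using Pd unfolding P_def k_def by (simp add: add_ac)
    show "j = k"
    proof (rule ccontr)
      assume "j \<noteq> k"
      then consider "j < k" | "k < j" by linarith
      then show False
      proof cases
        case 1
        have "sg k \<noteq> A" using persist[OF mono sj1, of k] 1 j rng by auto
        then show False using sd k_def by simp
      next
        case 2
        have "sg j \<noteq> A" using persist[OF mono sk1, of j] 2 j rng by auto
        then show False using sjA by simp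
      qed
    qed
  qed
  show ?thesis using bk rng uniq by blast
qed

end

locale cycb = cyc +
  assumes has_bd: "\<exists>k. bd k"
begin

definition Bs :: "int set" where "Bs = {k \<in> {0..<n}. bd k}"
definition bl :: "int list" where "bl = sorted_list_of_set Bs"
definition NN :: int where "NN = int (length bl)"
definition e :: "int \<Rightarrow> int" where "e t = bl ! nat (t mod NN) + n * (t div NN)"

lemma Bs_fin: "finite Bs" unfolding Bs_def by (rule finite_subset[of _ "{0..<n}"]) auto

lemma bd_mod: "bd (x mod n) = bd x"
  using bd_per[of "x mod n" "x div n"] by (simp add: mult.commute)

lemma Bs_ne: "Bs \<noteq> {}"
proof -
  obtain k where "bd k" using has_bd by blast
  then have "k mod n \<in> Bs" unfolding Bs_def using bd_mod n_pos by simp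
  then show ?thesis by blast
qed

lemma set_bl: "set bl = Bs" unfolding bl_def using Bs_fin by simp
lemma sorted_bl: "sorted_wrt (<) bl" unfolding bl_def by simp
lemma len_bl: "length bl = card Bs" unfolding bl_def by simp

lemma NN_pos: "NN \<ge> 1"
proof -
  have "card Bs > 0" using Bs_fin Bs_ne by (simp add: card_gt_0_iff)
  then show ?thesis unfolding NN_def len_bl by simp
qed

lemma bl_in: "i < length bl \<Longrightarrow> bl ! i \<in> Bs"
  using set_bl nth_mem by blast

lemma bl_rng: "i < length bl \<Longrightarrow> 0 \<le> bl ! i \<and> bl ! i < n \<and> bd (bl ! i)"
  using bl_in unfolding Bs_def by auto

lemma bl_less: "i < j \<Longrightarrow> j < length bl \<Longrightarrow> bl ! i < bl ! j"
  using sorted_bl by (simp add: sorted_wrt_iff_nth_less)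

lemma idx_ok: "nat (t mod NN) < length bl"
proof -
  have "t mod NN < NN" "0 \<le> t mod NN" using NN_pos by auto
  then show ?thesis unfolding NN_def by (simp add: nat_less_iff)
qed

lemma e_step: "e t < e (t+1)"
proof -
  define u where "u = t mod NN"
  define d where "d = t div NN"
  have t: "t = NN * d + u" unfolding u_def d_def by simp
  have u: "0 \<le> u" "u < NN" unfolding u_def using NN_pos by auto
  show ?thesis
  proof (cases "u + 1 < NN")
    case True
    have t1: "t + 1 = (u+1) + d * NN" using t by simp
    have m: "(t+1) mod NN = u + 1" "(t+1) div NN = d"
      unfolding t1 using u True by simp_all
    have "bl ! nat u < bl ! nat (u+1)"
      using bl_less[of "nat u" "nat (u+1)"] True u unfolding NN_def by (simp add: nat_less_iff)
    then show ?thesis unfolding e_def m u_def[symmetric] d_def[symmetric] by simp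
  next
    case False
    then have uu: "u = NN - 1" using u by simp
    have t1: "t + 1 = (d+1) * NN" using t uu by (simp add: algebra_simps)
    have m: "(t+1) mod NN = 0" "(t+1) div NN = d + 1"
      unfolding t1 using NN_pos by simp_all
    have a: "bl ! nat u < n" using bl_rng idx_ok u_def by blast
    have b: "0 \<le> bl ! nat 0" using bl_rng[of 0] NN_pos unfolding NN_def by (cases bl) auto
    show ?thesis unfolding e_def m u_def[symmetric] d_def[symmetric] using a b by (simp add: algebra_simps)
  qed
qed


lemma e_mono_aux: "e t < e (t + 1 + int d)"
proof (induction d)
  case 0 then show ?case using e_step by simp
next
  case (Suc d)
  have "e (t + 1 + int d) < e (t + 1 + int d + 1)" by (rule e_step)
  then show ?case using Suc by (simp add: add_ac)
qed

lemma e_mono: "s < t \<Longrightarrow> e s < e t"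
  using e_mono_aux[of s "nat (t - s - 1)"] by simp

lemma e_mono_iff: "e s < e t \<longleftrightarrow> s < t"
  using e_mono by (metis linorder_neq_iff order_less_asym)

lemma e_le_iff: "e s \<le> e t \<longleftrightarrow> s \<le> t"
  using e_mono_iff by (meson linorder_not_less)

lemma e_inj: "e s = e t \<longleftrightarrow> s = t"
proof
  assume "e s = e t"
  then have "s \<le> t" "t \<le> s" using e_le_iff by (metis order_refl)+
  then show "s = t" by simp
qed simp

lemma e_per: "e (t + k * NN) = e t + k * n"
proof -
  have "(t + k * NN) mod NN = t mod NN" by simp
  moreover have "(t + k * NN) div NN = t div NN + k" using NN_pos by simp
  ultimately show ?thesis unfolding e_def by (simp add: algebra_simps)
qed

lemma e_mod: "e t mod n = bl ! nat (t mod NN)"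
proof -
  have "0 \<le> bl ! nat (t mod NN)" "bl ! nat (t mod NN) < n" using bl_rng idx_ok by auto
  then show ?thesis unfolding e_def by simp
qed

lemma e_bd: "bd (e t)"
proof -
  have "bd (bl ! nat (t mod NN))" using bl_rng idx_ok by auto
  then show ?thesis using bd_mod[of "e t"] e_mod by simp
qed

lemma bd_e: "bd x \<Longrightarrow> \<exists>t. e t = x"
proof -
  assume "bd x"
  then have "x mod n \<in> Bs" unfolding Bs_def using bd_mod n_pos by simp
  then obtain i where i: "i < length bl" "bl ! i = x mod n" using set_bl by (metis in_set_conv_nth)
  define t where "t = int i + (x div n) * NN"
  have "t mod NN = int i" unfolding t_def using i(1) unfolding NN_def by simp
  moreover have "t div NN = x div n"
  proof -
    have "t div NN = int i div NN + x div n" unfolding t_def using NN_pos by simp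
    moreover have "int i div NN = 0" using i(1) unfolding NN_def by (simp add: div_pos_pos_trivial)
    ultimately show ?thesis by simp
  qed
  ultimately have "e t = x mod n + n * (x div n)" unfolding e_def using i by simp
  then show ?thesis by (metis mod_mult_div_eq add.commute)
qed

lemma e_mod_inj: "e s mod n = e t mod n \<Longrightarrow> s mod NN = t mod NN"
proof -
  assume "e s mod n = e t mod n"
  then have "bl ! nat (s mod NN) = bl ! nat (t mod NN)" using e_mod by simp
  then have "nat (s mod NN) = nat (t mod NN)"
    using bl_less idx_ok by (metis linorder_neq_iff order_less_irrefl)
  moreover have "0 \<le> s mod NN" "0 \<le> t mod NN" using NN_pos by auto
  ultimately show ?thesis by simp
qed

lemma e_gap: "e t \<le> e (t - 1) + n"
proof -
  have "e (t - 1 + 1 * NN) = e (t - 1) + n" using e_per[of "t-1" 1] by simp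
  moreover have "t \<le> t - 1 + 1 * NN" using NN_pos by simp
  ultimately show ?thesis using e_le_iff by (metis)
qed

lemma no_bd_between: "e (t - 1) < j \<Longrightarrow> j < e t \<Longrightarrow> \<not> bd j"
proof
  assume a: "e (t - 1) < j" "j < e t" "bd j"
  then obtain s where s: "e s = j" using bd_e by blast
  then have "t - 1 < s" "s < t" using a e_mono_iff by auto
  then show False by simp
qed

lemma lev_ex: "\<exists>t. e (t - 1) < x \<and> x \<le> e t"
proof -
  define K where "K = \<bar>x - e 0\<bar> + 1"
  have lo: "e (- K * NN) < x"
  proof -
    have "e (0 + (-K) * NN) = e 0 + (-K) * n" by (rule e_per)
    moreover have "K * n \<ge> K" using mult_left_mono[of 1 n K] n_pos K_def by simp
    ultimately show ?thesis unfolding K_def by (simp add: algebra_simps)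
  qed
  have hi: "x \<le> e (K * NN)"
  proof -
    have "e (0 + K * NN) = e 0 + K * n" by (rule e_per)
    moreover have "K * n \<ge> K" using mult_left_mono[of 1 n K] n_pos K_def by simp
    ultimately show ?thesis unfolding K_def by (simp add: algebra_simps)
  qed
  define P where "P = (\<lambda>i::nat. x \<le> e (- K * NN + int i))"
  have "2 * K * NN \<ge> 0" using K_def NN_pos by simp
  then have "- K * NN + int (nat (2 * K * NN)) = K * NN" by simp
  then have ex: "P (nat (2 * K * NN))" unfolding P_def using hi by simp
  define i where "i = (LEAST i. P i)"
  have Pi: "P i" using LeastI[of P, OF ex] i_def by simp
  have i0: "i \<noteq> 0"
  proof
    assume "i = 0"
    then have "x \<le> e (- K * NN)" using Pi unfolding P_def by simp
    then show False using lo by simp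
  qed
  then obtain i' where i': "i = Suc i'" by (cases i) auto
  have "\<not> P i'" using not_less_Least[of i' P] i' i_def by simp
  then have "e (- K * NN + int i - 1) < x" unfolding P_def i' by simp
  then show ?thesis using Pi unfolding P_def by (intro exI[of _ "- K * NN + int i"]) simp
qed

definition lev :: "int \<Rightarrow> int" where "lev x = (THE t. e (t - 1) < x \<and> x \<le> e t)"

lemma lev_uniq: "e (t - 1) < x \<Longrightarrow> x \<le> e t \<Longrightarrow> e (s - 1) < x \<Longrightarrow> x \<le> e s \<Longrightarrow> s = t"
proof -
  assume a: "e (t - 1) < x" "x \<le> e t" "e (s - 1) < x" "x \<le> e s"
  then have "e (t - 1) < e s" "e (s - 1) < e t" by auto
  then have "t - 1 < s" "s - 1 < t" using e_mono_iff by auto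
  then show "s = t" by simp
qed

lemma lev_char: "e (t - 1) < x \<Longrightarrow> x \<le> e t \<Longrightarrow> lev x = t"
  unfolding lev_def using lev_uniq by blast

lemma lev_prop: "e (lev x - 1) < x \<and> x \<le> e (lev x)"
  using lev_ex lev_char by metis

lemma lev_e: "lev (e t) = t"
  by (rule lev_char) (auto simp: e_mono_iff)

lemma lev_e1: "lev (e t + 1) = t + 1"
proof (rule lev_char)
  show "e (t + 1 - 1) < e t + 1" by simp
  show "e t + 1 \<le> e (t + 1)" using e_step[of t] by simp
qed

lemma lev_per: "lev (x + k * n) = lev x + k * NN"
proof (rule lev_char)
  have "e (lev x + k * NN - 1) = e (lev x - 1) + k * n" using e_per[of "lev x - 1" k] by (simp add: algebra_simps)
  then show "e (lev x + k * NN - 1) < x + k * n" using lev_prop[of x] by simp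
  have "e (lev x + k * NN) = e (lev x) + k * n" using e_per by simp
  then show "x + k * n \<le> e (lev x + k * NN)" using lev_prop[of x] by simp
qed

lemma lev_mono: "x \<le> y \<Longrightarrow> lev x \<le> lev y"
proof (rule ccontr)
  assume "x \<le> y" "\<not> lev x \<le> lev y"
  then have "lev y \<le> lev x - 1" by simp
  then have "e (lev y) \<le> e (lev x - 1)" using e_le_iff by blast
  then show False using lev_prop[of x] lev_prop[of y] \<open>x \<le> y\<close> by simp
qed

lemma lev_one:
  assumes "x \<le> k" "k < y" "bd k" "\<forall>j. x \<le> j \<and> j < y \<and> bd j \<longrightarrow> j = k"
  shows "lev y = lev x + 1"
proof -
  obtain s where s: "e s = k" using bd_e assms(3) by blast
  have lx: "lev x = s"
  proof (rule lev_char)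
    show "x \<le> e s" using s assms(1) by simp
    show "e (s - 1) < x"
    proof (rule ccontr)
      assume "\<not> e (s - 1) < x"
      then have "x \<le> e (s - 1)" by simp
      moreover have "e (s - 1) < k" using s e_mono_iff[of "s-1" s] by simp
      ultimately have "x \<le> e (s - 1) \<and> e (s - 1) < y \<and> bd (e (s - 1))" using e_bd[of "s - 1"] assms(2) by simp
      then have "e (s - 1) = k" using assms(4) by blast
      then show False using s e_inj[of "s - 1" s] by simp
    qed
  qed
  have ly: "lev y = s + 1"
  proof (rule lev_char)
    show "e (s + 1 - 1) < y" using s assms(2) by simp
    show "y \<le> e (s + 1)"
    proof (rule ccontr)
      assume "\<not> y \<le> e (s + 1)"
      then have "e (s + 1) < y" by simp
      moreover have "k < e (s + 1)" using s e_step[of s] by simp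
      ultimately have "x \<le> e (s + 1) \<and> e (s + 1) < y \<and> bd (e (s + 1))" using e_bd[of "s + 1"] assms(1) by simp
      then have "e (s + 1) = k" using assms(4) by blast
      then show False using s e_inj[of "s + 1" s] by simp
    qed
  qed
  show ?thesis using lx ly by simp
qed

lemma sg_lev: "sg x = sg (e (lev x))"
  using const_run[of x "e (lev x)"] lev_prop[of x] no_bd_between[of "lev x"] by auto

lemma sg_alt: "sg (e (t + 1)) \<noteq> sg (e t)"
proof -
  have "sg (e (t+1)) = sg (e t + 1)"
    using const_run[of "e t + 1" "e (t+1)"] e_step[of t] no_bd_between[of "t+1"] by auto
  then show ?thesis using e_bd[of t] unfolding bd_def by simp
qed

lemma sg_e_par_aux: "sg (e (s + int d)) = (if even d then sg (e s) else 1 - sg (e s))"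
proof (induction d)
  case 0 then show ?case by simp
next
  case (Suc d)
  have "sg (e (s + int d + 1)) \<noteq> sg (e (s + int d))" by (rule sg_alt)
  then have "sg (e (s + int (Suc d))) = 1 - sg (e (s + int d))"
    using sg01[of "e (s + int d)"] sg01[of "e (s + int d + 1)"] by (auto simp: add_ac)
  then show ?case using Suc sg01[of "e s"] by auto
qed

lemma sg_e_par: "s \<le> t \<Longrightarrow> sg (e t) = sg (e s) \<longleftrightarrow> even (t - s)"
proof -
  assume "s \<le> t"
  then have "t = s + int (nat (t - s))" by simp
  then have "sg (e t) = (if even (nat (t - s)) then sg (e s) else 1 - sg (e s))"
    using sg_e_par_aux by metis
  moreover have "even (nat (t - s)) \<longleftrightarrow> even (t - s)" using \<open>s \<le> t\<close> by (simp add: even_nat_iff)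
  ultimately show ?thesis using sg01[of "e s"] by auto
qed

lemma sg_par: "sg x = sg y \<longleftrightarrow> even (lev x - lev y)"
proof (cases "lev y \<le> lev x")
  case True
  then show ?thesis using sg_e_par[OF True] sg_lev[of x] sg_lev[of y] by simp
next
  case False
  then have "lev x \<le> lev y" by simp
  then have "sg (e (lev y)) = sg (e (lev x)) \<longleftrightarrow> even (lev y - lev x)" by (rule sg_e_par)
  moreover have "even (lev y - lev x) \<longleftrightarrow> even (lev x - lev y)" by presburger
  ultimately show ?thesis using sg_lev[of x] sg_lev[of y] by auto
qed

lemma NN_even: "even NN"
proof -
  have "sg (e (0 + 1 * NN)) = sg (e 0)" using e_per[of 0 1] sg_per[of "e 0" 1] by simp
  then show ?thesis using sg_e_par[of 0 NN] NN_pos by simp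
qed

end

lemma cyc_img:
  assumes "s \<le> f" "f - s < n"
  shows "cyc_interval n (s mod n) (f mod n) = (\<lambda>x. x mod n) ` {s..f}"
proof -
  have n: "n > 0" using assms by simp
  have len: "(f mod n - s mod n) mod n = f - s"
    using assms by (simp add: mod_diff_eq)
  have "cyc_interval n (s mod n) (f mod n) = {(s mod n + k) mod n | k. 0 \<le> k \<and> k \<le> f - s}"
    unfolding cyc_interval_def len by simp
  also have "\<dots> = {(s + k) mod n | k. 0 \<le> k \<and> k \<le> f - s}"
    by (simp add: mod_add_left_eq)
  also have "\<dots> = (\<lambda>x. x mod n) ` {s..f}"
  proof
    show "{(s + k) mod n | k. 0 \<le> k \<and> k \<le> f - s} \<subseteq> (\<lambda>x. x mod n) ` {s..f}"
    proof
      fix z assume "z \<in> {(s + k) mod n | k. 0 \<le> k \<and> k \<le> f - s}"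
      then obtain k where "z = (s + k) mod n" "0 \<le> k" "k \<le> f - s" by blast
      then show "z \<in> (\<lambda>x. x mod n) ` {s..f}" by (intro image_eqI[of _ _ "s + k"]) auto
    qed
    show "(\<lambda>x. x mod n) ` {s..f} \<subseteq> {(s + k) mod n | k. 0 \<le> k \<and> k \<le> f - s}"
    proof
      fix z assume "z \<in> (\<lambda>x. x mod n) ` {s..f}"
      then obtain x where "z = x mod n" "s \<le> x" "x \<le> f" by auto
      then show "z \<in> {(s + k) mod n | k. 0 \<le> k \<and> k \<le> f - s}"
        by (intro CollectI exI[of _ "x - s"]) auto
    qed
  qed
  finally show ?thesis .
qed

lemma mod_eq_close:
  fixes z w n :: int
  assumes "z mod n = w mod n" "c \<le> z" "z < c + n" "c \<le> w" "w < c + n"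
  shows "z = w"
proof -
  have "(z - w) mod n = 0" using assms(1) by (simp add: mod_diff_eq[symmetric])
  then obtain k where k: "z - w = n * k" by (metis dvd_def mod_0_imp_dvd)
  have "n > 0" using assms by simp
  have "- n < z - w" "z - w < n" using assms by auto
  then have "k = 0" using k \<open>n > 0\<close>
    by (smt (verit, best) mult_le_cancel_left1 mult_minus_right mult_less_cancel_left_pos)
  then show ?thesis using k by simp
qed

context cycb
begin

definition blk :: "int \<Rightarrow> int \<times> int" where
  "blk t = ((e (t - 1) + 1) mod n, e t mod n)"

lemma blk_len: "e (t - 1) + 1 \<le> e t" "e t - (e (t - 1) + 1) < n"
  using e_step[of "t-1"] e_gap[of t] by auto

lemma blk_cyc: "cyc_interval n (fst (blk t)) (snd (blk t)) = (\<lambda>x. x mod n) ` {e (t - 1) + 1 .. e t}"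
  unfolding blk_def using cyc_img[OF blk_len] by simp

lemma sg_run: "e (t - 1) < x \<Longrightarrow> x \<le> e t \<Longrightarrow> sg x = sg (e t)"
  using const_run[of x "e t"] no_bd_between[of t] by auto

lemma sg_ne: "sg x \<noteq> sg y \<Longrightarrow> sg x = 1 - sg y"
  using sg01[of x] sg01[of y] by auto

lemma blk_in: "blk t \<in> blocks n \<sigma>"
proof -
  define \<beta> where "\<beta> = sg (e t)"
  have b01: "\<beta> \<in> {0,1}" using sg01 \<beta>_def by auto
  have i: "fst (blk t) \<in> {0..<n}" "snd (blk t) \<in> {0..<n}" unfolding blk_def using n_pos by auto
  have all: "\<forall>k \<in> cyc_interval n (fst (blk t)) (snd (blk t)). \<sigma> k = \<beta>"
  proof
    fix k assume "k \<in> cyc_interval n (fst (blk t)) (snd (blk t))"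
    then obtain x where x: "k = x mod n" "e (t - 1) + 1 \<le> x" "x \<le> e t" unfolding blk_cyc by auto
    have "\<sigma> k = sg x" unfolding x(1) sg_def by simp
    also have "\<dots> = \<beta>" using sg_run[of t x] x \<beta>_def by simp
    finally show "\<sigma> k = \<beta>" .
  qed
  have l: "\<sigma> ((fst (blk t) - 1) mod n) = 1 - \<beta>"
  proof -
    have "(fst (blk t) - 1) mod n = e (t - 1) mod n" unfolding blk_def by (simp add: mod_diff_left_eq)
    then have "\<sigma> ((fst (blk t) - 1) mod n) = sg (e (t - 1))" unfolding sg_def by simp
    moreover have "sg (e (t - 1) + 1) = \<beta>" using sg_run[of t "e (t-1) + 1"] blk_len[of t] \<beta>_def by simp
    moreover have "sg (e (t - 1)) \<noteq> sg (e (t - 1) + 1)" using e_bd[of "t-1"] unfolding bd_def .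
    ultimately show ?thesis using sg_ne by metis
  qed
  have r: "\<sigma> ((snd (blk t) + 1) mod n) = 1 - \<beta>"
  proof -
    have "(snd (blk t) + 1) mod n = (e t + 1) mod n" unfolding blk_def by (simp add: mod_add_left_eq)
    then have "\<sigma> ((snd (blk t) + 1) mod n) = sg (e t + 1)" unfolding sg_def by simp
    moreover have "sg (e t) \<noteq> sg (e t + 1)" using e_bd[of t] unfolding bd_def .
    ultimately show ?thesis using sg_ne \<beta>_def by metis
  qed
  have "is_block n \<sigma> \<beta> (blk t)" unfolding is_block_def Let_def using i all l r by simp
  then show ?thesis unfolding blocks_def using b01 by blast
qed

lemma blk_shift: "blk (t + k * NN) = blk t"
proof -
  have "e (t + k * NN - 1) = e (t - 1) + k * n" using e_per[of "t - 1" k] by (simp add: algebra_simps)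
  moreover have "(e (t - 1) + k * n + 1) mod n = (e (t - 1) + 1) mod n"
    using mod_mult_self1[of "e (t - 1) + 1" k n] by (simp add: add_ac)
  ultimately show ?thesis unfolding blk_def using e_per[of t k] by simp
qed

lemma blk_eq: "blk s = blk t \<longleftrightarrow> s mod NN = t mod NN"
proof
  assume "blk s = blk t"
  then have "e s mod n = e t mod n" unfolding blk_def by simp
  then show "s mod NN = t mod NN" by (rule e_mod_inj)
next
  assume a: "s mod NN = t mod NN"
  have "t = s + ((t - s) div NN) * NN"
  proof -
    have "(t - s) mod NN = 0" using a by (simp add: mod_diff_eq[symmetric])
    then show ?thesis by (metis add.commute diff_add_cancel minus_mod_eq_div_mult add_0 diff_zero)
  qed
  then show "blk s = blk t" using blk_shift by metis
qed

lemma blocks_blk: "Y \<in> blocks n \<sigma> \<Longrightarrow> \<exists>t. Y = blk t"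
proof -
  assume "Y \<in> blocks n \<sigma>"
  then obtain \<beta> where b: "\<beta> \<in> {0,1}" "is_block n \<sigma> \<beta> Y" unfolding blocks_def by blast
  obtain i j where Y: "Y = (i, j)" by (cases Y)
  have ij: "0 \<le> i" "i < n" "0 \<le> j" "j < n"
    and all: "\<forall>k \<in> cyc_interval n i j. \<sigma> k = \<beta>"
    and l: "\<sigma> ((i - 1) mod n) = 1 - \<beta>" and r: "\<sigma> ((j + 1) mod n) = 1 - \<beta>"
    using b(2) unfolding is_block_def Let_def Y by auto
  define len where "len = (j - i) mod n"
  have len: "0 \<le> len" "len < n" unfolding len_def using n_pos by auto
  have jj: "(i + len) mod n = j"
  proof -
    have "(i + len) mod n = (i + (j - i)) mod n" unfolding len_def by (rule mod_add_right_eq)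
    then show ?thesis using ij by simp
  qed
  have inrun: "sg x = \<beta>" if "i \<le> x" "x \<le> i + len" for x
  proof -
    have "x mod n \<in> cyc_interval n i j" unfolding cyc_interval_def len_def[symmetric]
      using that by (intro CollectI exI[of _ "x - i"]) (simp add: mod_add_right_eq)
    then show ?thesis using all unfolding sg_def by simp
  qed
  have bne: "1 - \<beta> \<noteq> \<beta>" using b(1) by auto
  have bl: "bd (i - 1)" unfolding bd_def using l inrun[of i] len bne unfolding sg_def by simp
  have br: "bd (i + len)"
  proof -
    have "(i + len + 1) mod n = (j + 1) mod n" using jj mod_add_left_eq[of "i + len" n 1] by simp
    then have "sg (i + len + 1) = 1 - \<beta>" unfolding sg_def using r by simp
    then show ?thesis unfolding bd_def using inrun[of "i + len"] len bne by simp
  qed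
  have nob: "\<not> bd x" if "i \<le> x" "x < i + len" for x
    unfolding bd_def using inrun[of x] inrun[of "x+1"] that by simp
  obtain t0 where t0: "e t0 = i - 1" using bd_e bl by blast
  obtain s where s: "e s = i + len" using bd_e br by blast
  have "t0 < s" using t0 s e_mono_iff[of t0 s] len by simp
  then have "t0 + 1 \<le> s" by simp
  then have "e (t0 + 1) \<le> i + len" using s e_le_iff by metis
  moreover have "i \<le> e (t0 + 1)" using e_step[of t0] t0 by simp
  moreover have "bd (e (t0 + 1))" by (rule e_bd)
  ultimately have "e (t0 + 1) = i + len" using nob by force
  then have "blk (t0 + 1) = (i, j)" unfolding blk_def using t0 jj ij by simp
  then show ?thesis using Y by metis
qed

lemma lev_in: "e (lev x - 1) + 1 \<le> x" "x \<le> e (lev x)"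
  using lev_prop[of x] by auto

lemma mem_blk: "x mod n \<in> cyc_interval n (fst (blk t)) (snd (blk t)) \<longleftrightarrow> blk (lev x) = blk t"
proof
  assume "x mod n \<in> cyc_interval n (fst (blk t)) (snd (blk t))"
  then obtain y where y: "x mod n = y mod n" "e (t - 1) + 1 \<le> y" "y \<le> e t" unfolding blk_cyc by auto
  have ly: "lev y = t" using y by (intro lev_char) auto
  have "(x - y) mod n = 0" using y(1) by (simp add: mod_diff_eq[symmetric])
  then have "x = y + ((x - y) div n) * n" by (metis add.commute diff_add_cancel minus_mod_eq_div_mult add_0 diff_zero)
  then have "lev x = t + ((x - y) div n) * NN" using lev_per[of y "(x - y) div n"] ly by metis
  then show "blk (lev x) = blk t" using blk_shift by simp
next
  assume "blk (lev x) = blk t"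
  moreover have "x mod n \<in> cyc_interval n (fst (blk (lev x))) (snd (blk (lev x)))"
    unfolding blk_cyc using lev_in[of x] by auto
  ultimately show "x mod n \<in> cyc_interval n (fst (blk t)) (snd (blk t))" by simp
qed

lemma bc_blk: "block_containing n \<sigma> x = blk (lev x)"
  unfolding block_containing_def
proof (rule the_equality)
  show "blk (lev x) \<in> blocks n \<sigma> \<and> x mod n \<in> cyc_interval n (fst (blk (lev x))) (snd (blk (lev x)))"
    using blk_in mem_blk by simp
next
  fix Y assume a: "Y \<in> blocks n \<sigma> \<and> x mod n \<in> cyc_interval n (fst Y) (snd Y)"
  then obtain t where "Y = blk t" using blocks_blk by blast
  then show "Y = blk (lev x)" using a mem_blk by simp
qed

end

context cycb
begin

lemma blk_inj: "inj_on blk {A .. A + NN - 1}"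
proof (rule inj_onI)
  fix u v assume uv: "u \<in> {A .. A + NN - 1}" "v \<in> {A .. A + NN - 1}" "blk u = blk v"
  then have "u mod NN = v mod NN" using blk_eq by simp
  then have "(u - v) mod NN = 0" by (simp add: mod_diff_eq[symmetric])
  then obtain k where k: "u - v = NN * k" by (metis dvd_def mod_0_imp_dvd)
  have "- NN < u - v" "u - v < NN" using uv by auto
  then have "k = 0" using k NN_pos
    by (smt (verit, best) mult_le_cancel_left1 mult_minus_right mult_less_cancel_left_pos)
  then show "u = v" using k by simp
qed

lemma blk_rep: "blk u = blk (A + (u - A) mod NN)"
  unfolding blk_eq by (simp add: mod_add_right_eq)

lemma block_interval_blk:
  "block_interval n \<sigma> (blk A) (blk B) = blk ` {A .. A + (B - A) mod NN}"
proof -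
  define B' where "B' = A + (B - A) mod NN"
  have B'r: "A \<le> B'" "B' \<le> A + NN - 1" unfolding B'_def using NN_pos by auto
  have bB: "blk B = blk B'" unfolding B'_def by (rule blk_rep)
  have eB1: "e (A - 1) + 1 \<le> e B'" using e_mono_iff[of "A - 1" B'] B'r by simp
  have eAn: "e (A - 1 + 1 * NN) = e (A - 1) + n" using e_per[of "A - 1" 1] by simp
  have eB2: "e B' \<le> e (A - 1) + n" using e_le_iff[of B' "A - 1 + 1 * NN"] B'r eAn by simp
  have arc: "cyc_interval n (fst (blk A)) (snd (blk B)) = (\<lambda>x. x mod n) ` {e (A - 1) + 1 .. e B'}"
  proof -
    have "snd (blk B) = e B' mod n" using bB unfolding blk_def by simp
    moreover have "fst (blk A) = (e (A - 1) + 1) mod n" unfolding blk_def by simp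
    ultimately show ?thesis using cyc_img[of "e (A - 1) + 1" "e B'" n] eB1 eB2 by simp
  qed
  show ?thesis
  proof
    show "block_interval n \<sigma> (blk A) (blk B) \<subseteq> blk ` {A .. A + (B - A) mod NN}"
    proof
      fix Y assume Y: "Y \<in> block_interval n \<sigma> (blk A) (blk B)"
      then have Yb: "Y \<in> blocks n \<sigma>" and Ysub: "cyc_interval n (fst Y) (snd Y) \<subseteq> cyc_interval n (fst (blk A)) (snd (blk B))"
        unfolding block_interval_def by auto
      obtain u where u: "Y = blk u" using blocks_blk Yb by blast
      define u' where "u' = A + (u - A) mod NN"
      have Yu': "Y = blk u'" using u blk_rep u'_def by simp
      have u'r: "A \<le> u'" "u' \<le> A + NN - 1" unfolding u'_def using NN_pos by auto
      have "u' \<le> B'"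
      proof (rule ccontr)
        assume "\<not> u' \<le> B'"
        then have "B' \<le> u' - 1" by simp
        define z where "z = e (u' - 1) + 1"
        have z1: "e B' + 1 \<le> z" unfolding z_def using e_le_iff[of B' "u' - 1"] \<open>B' \<le> u' - 1\<close> by simp
        have "e (u' - 1) \<le> e (A - 1 + 1 * NN) - 1"
          using e_mono_iff[of "u' - 1" "A - 1 + 1 * NN"] u'r by simp
        then have z2: "z \<le> e (A - 1) + n" unfolding z_def using eAn by simp
        have "z mod n \<in> cyc_interval n (fst Y) (snd Y)" unfolding Yu' blk_cyc z_def
          using e_step[of "u' - 1"] by auto
        then have "z mod n \<in> (\<lambda>x. x mod n) ` {e (A - 1) + 1 .. e B'}" using Ysub arc by auto
        then obtain w where w: "z mod n = w mod n" "e (A - 1) + 1 \<le> w" "w \<le> e B'" by auto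
        have "z = w" using mod_eq_close[of z n w "e (A - 1) + 1"] w z1 z2 eB1 eB2 by simp
        then show False using w z1 by simp
      qed
      then show "Y \<in> blk ` {A .. A + (B - A) mod NN}" using Yu' u'r B'_def by auto
    qed
    show "blk ` {A .. A + (B - A) mod NN} \<subseteq> block_interval n \<sigma> (blk A) (blk B)"
    proof
      fix Y assume "Y \<in> blk ` {A .. A + (B - A) mod NN}"
      then obtain u where u: "Y = blk u" "A \<le> u" "u \<le> B'" unfolding B'_def by auto
      have "cyc_interval n (fst Y) (snd Y) \<subseteq> cyc_interval n (fst (blk A)) (snd (blk B))"
      proof -
        have "e (A - 1) \<le> e (u - 1)" using e_le_iff u by simp
        moreover have "e u \<le> e B'" using e_le_iff u by simp
        ultimately have "{e (u - 1) + 1 .. e u} \<subseteq> {e (A - 1) + 1 .. e B'}" by auto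
        then show ?thesis unfolding u(1) blk_cyc arc by (rule image_mono)
      qed
      then show "Y \<in> block_interval n \<sigma> (blk A) (blk B)" unfolding block_interval_def using u blk_in by simp
    qed
  qed
qed

lemma middle_blk:
  assumes m: "0 \<le> m" "2 * m < NN"
  shows "middle_block n (fst (blk A)) (blk ` {A .. A + 2 * m}) = blk (A + m)"
proof -
  define S where "S = blk ` {A .. A + 2 * m}"
  define x0 where "x0 = fst (blk A)"
  define d where "d = (\<lambda>W::int\<times>int. (fst W - x0) mod n)"
  have dval: "d (blk u) = e (u - 1) - e (A - 1)" if "A \<le> u" "u \<le> A + 2 * m" for u
  proof -
    have "d (blk u) = (e (u - 1) - e (A - 1)) mod n"
      unfolding d_def x0_def blk_def by (simp add: mod_diff_eq)
    moreover have "0 \<le> e (u - 1) - e (A - 1)" using e_le_iff that by simp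
    moreover have "e (u - 1) < e (A - 1 + 1 * NN)" using e_mono_iff that m by simp
    then have "e (u - 1) - e (A - 1) < n" using e_per[of "A - 1" 1] by simp
    ultimately show ?thesis by simp
  qed
  have inj: "inj_on blk {A .. A + 2 * m}"
    by (rule inj_on_subset[OF blk_inj[of A]]) (use m in auto)
  have below: "{W \<in> S. d W < d (blk u)} = blk ` {A ..< u}" if u: "A \<le> u" "u \<le> A + 2 * m" for u
  proof
    show "{W \<in> S. d W < d (blk u)} \<subseteq> blk ` {A ..< u}"
    proof
      fix W assume "W \<in> {W \<in> S. d W < d (blk u)}"
      then obtain v where v: "W = blk v" "A \<le> v" "v \<le> A + 2 * m" "d (blk v) < d (blk u)" unfolding S_def by auto
      then have "e (v - 1) < e (u - 1)" using dval u by simp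
      then have "v < u" using e_mono_iff by simp
      then show "W \<in> blk ` {A ..< u}" using v by auto
    qed
    show "blk ` {A ..< u} \<subseteq> {W \<in> S. d W < d (blk u)}"
    proof
      fix W assume "W \<in> blk ` {A ..< u}"
      then obtain v where v: "W = blk v" "A \<le> v" "v < u" by auto
      then have "e (v - 1) < e (u - 1)" using e_mono_iff by simp
      then show "W \<in> {W \<in> S. d W < d (blk u)}" unfolding S_def using v u dval by auto
    qed
  qed
  have above: "{W \<in> S. d W > d (blk u)} = blk ` {u <.. A + 2 * m}" if u: "A \<le> u" "u \<le> A + 2 * m" for u
  proof
    show "{W \<in> S. d W > d (blk u)} \<subseteq> blk ` {u <.. A + 2 * m}"
    proof
      fix W assume "W \<in> {W \<in> S. d W > d (blk u)}"
      then obtain v where v: "W = blk v" "A \<le> v" "v \<le> A + 2 * m" "d (blk v) > d (blk u)" unfolding S_def by auto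
      then have "e (v - 1) > e (u - 1)" using dval u by simp
      then have "v > u" using e_mono_iff by simp
      then show "W \<in> blk ` {u <.. A + 2 * m}" using v by auto
    qed
    show "blk ` {u <.. A + 2 * m} \<subseteq> {W \<in> S. d W > d (blk u)}"
    proof
      fix W assume "W \<in> blk ` {u <.. A + 2 * m}"
      then obtain v where v: "W = blk v" "u < v" "v \<le> A + 2 * m" by auto
      then have "e (v - 1) > e (u - 1)" using e_mono_iff by simp
      then show "W \<in> {W \<in> S. d W > d (blk u)}" unfolding S_def using v u dval by auto
    qed
  qed
  have cb: "card {W \<in> S. d W < d (blk u)} = nat (u - A)" if u: "A \<le> u" "u \<le> A + 2 * m" for u
  proof -
    have "inj_on blk {A ..< u}" by (rule inj_on_subset[OF inj]) (use u in auto)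
    then show ?thesis unfolding below[OF u] by (simp add: card_image)
  qed
  have ca: "card {W \<in> S. d W > d (blk u)} = nat (A + 2 * m - u)" if u: "A \<le> u" "u \<le> A + 2 * m" for u
  proof -
    have "inj_on blk {u <.. A + 2 * m}" by (rule inj_on_subset[OF inj]) (use u in auto)
    then show ?thesis unfolding above[OF u] by (simp add: card_image)
  qed
  have eq: "middle_block n x0 S = (THE Z. Z \<in> S \<and> card {W \<in> S. d W < d Z} = card {W \<in> S. d W > d Z})"
    unfolding middle_block_def d_def by simp
  have "middle_block n x0 S = blk (A + m)"
    unfolding eq
  proof (rule the_equality)
    show "blk (A + m) \<in> S \<and> card {W \<in> S. d W < d (blk (A + m))} = card {W \<in> S. d (blk (A + m)) < d W}"
      using cb[of "A + m"] ca[of "A + m"] m unfolding S_def by auto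
  next
    fix Z assume Z: "Z \<in> S \<and> card {W \<in> S. d W < d Z} = card {W \<in> S. d Z < d W}"
    then obtain u where u: "Z = blk u" "A \<le> u" "u \<le> A + 2 * m" unfolding S_def by auto
    then have "nat (u - A) = nat (A + 2 * m - u)" using Z cb[of u] ca[of u] by simp
    then have "u = A + m" using u by simp
    then show "Z = blk (A + m)" using u by simp
  qed
  then show ?thesis unfolding S_def x0_def .
qed

end

definition wc :: "int \<Rightarrow> (int \<Rightarrow> nat) \<Rightarrow> nat \<Rightarrow> int \<Rightarrow> int \<Rightarrow> nat" where
  "wc n s \<beta> r i = card {x \<in> {i - r .. i + r}. s (x mod n) = \<beta>}"

lemma card_shift_window:
  fixes r i n :: int
  shows "card {k \<in> {- r .. r}. s ((i + k) mod n) = \<beta>} = card {x \<in> {i - r .. i + r}. s (x mod n) = \<beta>}"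
proof -
  have "{x \<in> {i - r .. i + r}. s (x mod n) = \<beta>} = (\<lambda>k. i + k) ` {k \<in> {- r .. r}. s ((i + k) mod n) = \<beta>}"
  proof
    show "{x \<in> {i - r .. i + r}. s (x mod n) = \<beta>} \<subseteq> (\<lambda>k. i + k) ` {k \<in> {- r .. r}. s ((i + k) mod n) = \<beta>}"
    proof
      fix x assume "x \<in> {x \<in> {i - r .. i + r}. s (x mod n) = \<beta>}"
      then show "x \<in> (\<lambda>k. i + k) ` {k \<in> {- r .. r}. s ((i + k) mod n) = \<beta>}"
        by (intro image_eqI[of _ _ "x - i"]) auto
    qed
  qed auto
  moreover have "inj_on (\<lambda>k. i + k) {k \<in> {- r .. r}. s ((i + k) mod n) = \<beta>}" by (rule inj_onI) simp
  ultimately show ?thesis by (simp add: card_image)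
qed

lemma maj_wc: "maj r n s i = (if wc n s 0 (int r) i > wc n s 1 (int r) i then 0 else 1)"
  unfolding maj_def wc_def card_shift_window ..

lemma maj_mod: "maj r n s (i mod n) = maj r n s i"
proof -
  have "\<And>k. (i mod n + k) mod n = (i + k) mod n" by (rule mod_add_left_eq)
  then show ?thesis unfolding maj_def by (simp only:)
qed

lemma wc_sum:
  assumes v: "\<forall>x. s (x mod n) \<in> {0,1}" and r: "0 \<le> r"
  shows "wc n s 0 r i + wc n s 1 r i = 2 * nat r + 1"
proof -
  let ?A = "{x \<in> {i - r .. i + r}. s (x mod n) = 0}"
  let ?B = "{x \<in> {i - r .. i + r}. s (x mod n) = 1}"
  have "?A \<union> ?B = {i - r .. i + r}"
  proof
    show "{i - r .. i + r} \<subseteq> ?A \<union> ?B"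
    proof
      fix x assume x: "x \<in> {i - r .. i + r}"
      have "s (x mod n) \<in> {0,1}" using v by (rule spec)
      then show "x \<in> ?A \<union> ?B" using x by auto
    qed
  qed auto
  moreover have "?A \<inter> ?B = {}" by auto
  moreover have "finite ?A" "finite ?B" by (rule finite_subset[of _ "{i - r .. i + r}"]; auto)+
  ultimately have "card ?A + card ?B = card {i - r .. i + r}" using card_Un_disjoint[of ?A ?B] by simp
  also have "\<dots> = nat (2 * r + 1)" by simp
  also have "\<dots> = 2 * nat r + 1" using r by (simp add: nat_add_distrib nat_mult_distrib)
  finally show ?thesis unfolding wc_def .
qed

lemma card_window_split:
  fixes l u :: int
  shows "card {x \<in> {l .. u}. P x} = card {x \<in> {l + 1 .. u}. P x} + (if P l \<and> l \<le> u then 1 else 0)"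
proof (cases "P l \<and> l \<le> u")
  case True
  then have "{x \<in> {l .. u}. P x} = insert l {x \<in> {l + 1 .. u}. P x}" by auto
  moreover have "finite {x \<in> {l + 1 .. u}. P x}" by (rule finite_subset[of _ "{l + 1 .. u}"]) auto
  moreover have "l \<notin> {x \<in> {l + 1 .. u}. P x}" by auto
  ultimately show ?thesis using True by (simp only: card_insert_disjoint) simp
next
  case False
  have "{x \<in> {l .. u}. P x} = {x \<in> {l + 1 .. u}. P x}"
  proof (rule set_eqI)
    fix x show "x \<in> {x \<in> {l .. u}. P x} \<longleftrightarrow> x \<in> {x \<in> {l + 1 .. u}. P x}"
      using False by (cases "x = l") auto
  qed
  then show ?thesis using False by simp
qed

lemma card_window_split2:
  fixes l u :: int
  shows "card {x \<in> {l .. u + 1}. P x} = card {x \<in> {l .. u}. P x} + (if P (u + 1) \<and> l \<le> u + 1 then 1 else 0)"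
proof (cases "P (u + 1) \<and> l \<le> u + 1")
  case True
  then have "{x \<in> {l .. u + 1}. P x} = insert (u + 1) {x \<in> {l .. u}. P x}" by auto
  moreover have "finite {x \<in> {l .. u}. P x}" by (rule finite_subset[of _ "{l .. u}"]) auto
  moreover have "u + 1 \<notin> {x \<in> {l .. u}. P x}" by auto
  ultimately show ?thesis using True by (simp only: card_insert_disjoint) simp
next
  case False
  have "{x \<in> {l .. u + 1}. P x} = {x \<in> {l .. u}. P x}"
  proof (rule set_eqI)
    fix x show "x \<in> {x \<in> {l .. u + 1}. P x} \<longleftrightarrow> x \<in> {x \<in> {l .. u}. P x}"
      using False by (cases "x = u + 1") auto
  qed
  then show ?thesis using False by simp
qed

lemma wc_shift:
  assumes "0 \<le> r"
  shows "wc n s \<beta> r (i + 1) + (if s ((i - r) mod n) = \<beta> then 1 else 0)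
       = wc n s \<beta> r i + (if s ((i + r + 1) mod n) = \<beta> then 1 else 0)"
proof -
  let ?P = "\<lambda>x. s (x mod n) = \<beta>"
  have a: "wc n s \<beta> r i = card {x \<in> {i - r + 1 .. i + r}. ?P x} + (if ?P (i - r) then 1 else 0)"
    unfolding wc_def using card_window_split[of "i - r" "i + r" ?P] assms by simp
  have b: "wc n s \<beta> r (i + 1) = card {x \<in> {i - r + 1 .. i + r}. ?P x} + (if ?P (i + r + 1) then 1 else 0)"
  proof -
    have "wc n s \<beta> r (i + 1) = card {x \<in> {i - r + 1 .. i + r + 1}. ?P x}"
      unfolding wc_def by (rule arg_cong[where f=card]) auto
    also have "\<dots> = card {x \<in> {i - r + 1 .. i + r}. ?P x} + (if ?P (i + r + 1) then 1 else 0)"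
      using card_window_split2[of "i - r + 1" "i + r" ?P] assms by simp
    finally show ?thesis .
  qed
  show ?thesis using a b by simp
qed

lemma maj_iff:
  assumes v: "\<forall>x. s (x mod n) \<in> {0,1}" and b: "\<beta> \<in> {0,1}"
  shows "maj r n s i = \<beta> \<longleftrightarrow> wc n s \<beta> (int r) i \<ge> r + 1"
  using wc_sum[OF v, of "int r" i] b unfolding maj_wc by auto

lemma edge:
  assumes v: "\<forall>x. s (x mod n) \<in> {0,1}" and A: "A \<in> {0,1}"
    and m1: "maj r n s i = A" and m2: "maj r n s (i + 1) \<noteq> A"
  shows "s ((i - int r) mod n) = A \<and> s ((i + int r + 1) mod n) \<noteq> A"
proof -
  have "wc n s A (int r) i \<ge> r + 1" using maj_iff[OF v A, of r i] m1 by blast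
  moreover have "\<not> wc n s A (int r) (i + 1) \<ge> r + 1" using maj_iff[OF v A, of r "i + 1"] m2 by blast
  moreover note wc_shift[of "int r" n s A i]
  ultimately show ?thesis by (auto split: if_splits)
qed

lemma mono_up:
  assumes v: "\<forall>x. s (x mod n) \<in> {0,1}" and A: "A \<in> {0,1}"
    and "s ((j + int r + 1) mod n) = A" "maj r n s j = A"
  shows "maj r n s (j + 1) = A"
proof -
  have "wc n s A (int r) j \<ge> r + 1" using maj_iff[OF v A, of r j] assms by blast
  moreover note wc_shift[of "int r" n s A j]
  ultimately have "wc n s A (int r) (j + 1) \<ge> r + 1" using assms by (auto split: if_splits)
  then show ?thesis using maj_iff[OF v A, of r "j + 1"] by blast
qed

lemma mono_down:
  assumes v: "\<forall>x. s (x mod n) \<in> {0,1}" and A: "A \<in> {0,1}"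
    and "s ((j - int r) mod n) = A" "maj r n s j \<noteq> A"
  shows "maj r n s (j + 1) \<noteq> A"
proof -
  have "\<not> wc n s A (int r) j \<ge> r + 1" using maj_iff[OF v A, of r j] assms by blast
  moreover note wc_shift[of "int r" n s A j]
  ultimately have "\<not> wc n s A (int r) (j + 1) \<ge> r + 1" using assms by (auto split: if_splits)
  then show ?thesis using maj_iff[OF v A, of r "j + 1"] by simp
qed


lemma run_of_block:
  assumes n: "n \<ge> 1" and v: "\<forall>i\<in>{0..<n}. \<tau> i \<in> {0,1}" and X: "(a, b) \<in> blocks n \<tau>"
  shows "\<exists>\<beta>\<in>{0,1}. 0 \<le> a \<and> a < n \<and> 0 \<le> b \<and> b < n
    \<and> (\<forall>x. a \<le> x \<and> x \<le> a + (b - a) mod n \<longrightarrow> \<tau> (x mod n) = \<beta>)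
    \<and> \<tau> ((a - 1) mod n) \<noteq> \<beta> \<and> \<tau> ((a + (b - a) mod n + 1) mod n) \<noteq> \<beta>"
proof -
  obtain \<beta> where b: "\<beta> \<in> {0,1}" "is_block n \<tau> \<beta> (a, b)" using X unfolding blocks_def by blast
  have ij: "0 \<le> a" "a < n" "0 \<le> b" "b < n"
    and all: "\<forall>k \<in> cyc_interval n a b. \<tau> k = \<beta>"
    and l: "\<tau> ((a - 1) mod n) = 1 - \<beta>" and r: "\<tau> ((b + 1) mod n) = 1 - \<beta>"
    using b(2) unfolding is_block_def Let_def by auto
  define len where "len = (b - a) mod n"
  have jj: "(a + len) mod n = b"
  proof -
    have "(a + len) mod n = (a + (b - a)) mod n" unfolding len_def by (rule mod_add_right_eq)
    then show ?thesis using ij by simp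
  qed
  have inrun: "\<tau> (x mod n) = \<beta>" if "a \<le> x" "x \<le> a + len" for x
  proof -
    have "x mod n \<in> cyc_interval n a b" unfolding cyc_interval_def len_def[symmetric]
      using that by (intro CollectI exI[of _ "x - a"]) (simp add: mod_add_right_eq)
    then show ?thesis using all by simp
  qed
  have bne: "1 - \<beta> \<noteq> \<beta>" using b(1) by auto
  have rr: "\<tau> ((a + len + 1) mod n) \<noteq> \<beta>"
  proof -
    have "(a + len + 1) mod n = (b + 1) mod n" using jj mod_add_left_eq[of "a + len" n 1] by simp
    then show ?thesis using r bne by simp
  qed
  show ?thesis using b(1) ij inrun l bne rr unfolding len_def by auto
qed

lemma run_facts:
  fixes s t :: "int \<Rightarrow> nat" and r :: nat
  assumes H1: "\<forall>i. t (i mod n) = maj r n s i" and H2: "\<forall>i. s (i mod n) = maj r n t i"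
    and vs: "\<forall>x. s (x mod n) \<in> {0,1}" and vt: "\<forall>x. t (x mod n) \<in> {0,1}"
    and b: "\<beta> \<in> {0,1}" and pq: "p < q"
    and run: "\<forall>x. p < x \<and> x \<le> q \<longrightarrow> t (x mod n) = \<beta>"
    and lp: "t (p mod n) \<noteq> \<beta>" and rq: "t ((q + 1) mod n) \<noteq> \<beta>"
  shows "s ((q - int r) mod n) = \<beta>" "s ((q + int r + 1) mod n) \<noteq> \<beta>"
    "s ((p - int r) mod n) \<noteq> \<beta>" "s ((p + int r + 1) mod n) = \<beta>"
    "\<forall>j. p - int r \<le> j \<and> j < q - int r \<and> s (j mod n) = \<beta> \<longrightarrow> s ((j + 1) mod n) = \<beta>"
    "\<forall>j. p + int r + 1 \<le> j \<and> j < q + int r \<and> s (j mod n) \<noteq> \<beta> \<longrightarrow> s ((j + 1) mod n) \<noteq> \<beta>"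
proof -
  have e1: "maj r n s q = \<beta>" using H1 run pq by (metis order_refl)
  have e2: "maj r n s (q + 1) \<noteq> \<beta>" using H1 rq by metis
  have E: "s ((q - int r) mod n) = \<beta> \<and> s ((q + int r + 1) mod n) \<noteq> \<beta>" by (rule edge[OF vs b e1 e2])
  then show "s ((q - int r) mod n) = \<beta>" "s ((q + int r + 1) mod n) \<noteq> \<beta>" by auto
  have b': "1 - \<beta> \<in> {0,1}" using b by auto
  have tp: "t (p mod n) = 1 - \<beta>" using lp vt b by (metis insert_iff singletonD diff_zero diff_self_eq_0 cancel_comm_monoid_add_class.diff_cancel)
  have f1: "maj r n s p = 1 - \<beta>" using H1 tp by metis
  have f2: "maj r n s (p + 1) \<noteq> 1 - \<beta>"
  proof -
    have "t ((p + 1) mod n) = \<beta>" using run pq by simp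
    then show ?thesis using H1 b by (metis diff_zero diff_self_eq_0 insert_iff singletonD one_neq_zero)
  qed
  have F: "s ((p - int r) mod n) = 1 - \<beta> \<and> s ((p + int r + 1) mod n) \<noteq> 1 - \<beta>" by (rule edge[OF vs b' f1 f2])
  have sp: "s ((p + int r + 1) mod n) \<in> {0,1}" using vs by blast
  show "s ((p - int r) mod n) \<noteq> \<beta>" using F b by auto
  show "s ((p + int r + 1) mod n) = \<beta>" using F b sp by auto
  show "\<forall>j. p - int r \<le> j \<and> j < q - int r \<and> s (j mod n) = \<beta> \<longrightarrow> s ((j + 1) mod n) = \<beta>"
  proof (intro allI impI)
    fix j assume j: "p - int r \<le> j \<and> j < q - int r \<and> s (j mod n) = \<beta>"
    have "t ((j + int r + 1) mod n) = \<beta>" using run j by simp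
    moreover have "maj r n t j = \<beta>" using H2 j by metis
    ultimately have "maj r n t (j + 1) = \<beta>" by (rule mono_up[OF vt b])
    then show "s ((j + 1) mod n) = \<beta>" using H2 by metis
  qed
  show "\<forall>j. p + int r + 1 \<le> j \<and> j < q + int r \<and> s (j mod n) \<noteq> \<beta> \<longrightarrow> s ((j + 1) mod n) \<noteq> \<beta>"
  proof (intro allI impI)
    fix j assume j: "p + int r + 1 \<le> j \<and> j < q + int r \<and> s (j mod n) \<noteq> \<beta>"
    have "t ((j - int r) mod n) = \<beta>" using run j by simp
    moreover have "maj r n t j \<noteq> \<beta>" using H2 j by metis
    ultimately have "maj r n t (j + 1) \<noteq> \<beta>" by (rule mono_down[OF vt b])
    then show "s ((j + 1) mod n) \<noteq> \<beta>" using H2 by metis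
  qed
qed

context cyc
begin

lemma run_bd:
  assumes "sg (p - R) \<noteq> \<beta>" "sg (q - R) = \<beta>" "p < q"
    "\<forall>j. p - R \<le> j \<and> j < q - R \<and> sg j = \<beta> \<longrightarrow> sg (j + 1) = \<beta>"
  shows "\<exists>k. bd k"
proof -
  define A where "A = sg (p - R)"
  have "\<forall>j. p - R \<le> j \<and> j < q - R \<and> sg j \<noteq> A \<longrightarrow> sg (j + 1) \<noteq> A"
  proof (intro allI impI)
    fix j assume j: "p - R \<le> j \<and> j < q - R \<and> sg j \<noteq> A"
    then have "sg j = \<beta>" using sg01[of j] sg01[of "p - R"] sg01[of "q - R"] assms(1,2) A_def by auto
    then have "sg (j + 1) = \<beta>" using assms(4) j by blast
    then show "sg (j + 1) \<noteq> A" using assms(1) A_def by simp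
  qed
  then show ?thesis using one_bd[of "p - R" "q - R" A] assms A_def by auto
qed

end

context cycb
begin

lemma run_levels:
  assumes "p < q" "sg (q - R) = \<beta>" "sg (q + R + 1) \<noteq> \<beta>" "sg (p - R) \<noteq> \<beta>" "sg (p + R + 1) = \<beta>"
    "\<forall>j. p - R \<le> j \<and> j < q - R \<and> sg j = \<beta> \<longrightarrow> sg (j + 1) = \<beta>"
    "\<forall>j. p + R + 1 \<le> j \<and> j < q + R \<and> sg j \<noteq> \<beta> \<longrightarrow> sg (j + 1) \<noteq> \<beta>"
  shows "lev (q - R) = lev (p - R) + 1" "lev (q + R + 1) = lev (p + R + 1) + 1"
    "even (lev (p + R + 1) - lev (q - R))"
proof -
  define A where "A = sg (p - R)"
  have "\<forall>j. p - R \<le> j \<and> j < q - R \<and> sg j \<noteq> A \<longrightarrow> sg (j + 1) \<noteq> A"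
  proof (intro allI impI)
    fix j assume j: "p - R \<le> j \<and> j < q - R \<and> sg j \<noteq> A"
    then have "sg j = \<beta>" using sg01[of j] sg01[of "p - R"] sg01[of "q - R"] assms(2,4) A_def by auto
    then have "sg (j + 1) = \<beta>" using assms(6) j by blast
    then show "sg (j + 1) \<noteq> A" using assms(4) A_def by simp
  qed
  then obtain k where k: "p - R \<le> k" "k < q - R" "bd k" "\<forall>j. p - R \<le> j \<and> j < q - R \<and> bd j \<longrightarrow> j = k"
    using one_bd[of "p - R" "q - R" A] assms A_def by auto
  show "lev (q - R) = lev (p - R) + 1" by (rule lev_one[OF k])
  have "\<forall>j. p + R + 1 \<le> j \<and> j < q + R + 1 \<and> sg j \<noteq> \<beta> \<longrightarrow> sg (j + 1) \<noteq> \<beta>"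
  proof (intro allI impI)
    fix j assume j: "p + R + 1 \<le> j \<and> j < q + R + 1 \<and> sg j \<noteq> \<beta>"
    show "sg (j + 1) \<noteq> \<beta>"
    proof (cases "j = q + R")
      case True then show ?thesis using assms(3) by simp
    next
      case False then show ?thesis using assms(7) j by auto
    qed
  qed
  then obtain k2 where k2: "p + R + 1 \<le> k2" "k2 < q + R + 1" "bd k2"
      "\<forall>j. p + R + 1 \<le> j \<and> j < q + R + 1 \<and> bd j \<longrightarrow> j = k2"
    using one_bd[of "p + R + 1" "q + R + 1" \<beta>] assms by auto
  show "lev (q + R + 1) = lev (p + R + 1) + 1" by (rule lev_one[OF k2])
  have "sg (p + R + 1) = sg (q - R)" using assms(2,5) by simp
  then show "even (lev (p + R + 1) - lev (q - R))" using sg_par by blast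
qed

lemma lev_cong: "x mod n = y mod n \<Longrightarrow> \<exists>k. lev y = lev x + k * NN"
proof -
  assume "x mod n = y mod n"
  then have "(y - x) mod n = 0" by (simp add: mod_diff_eq[symmetric])
  then have "y = x + ((y - x) div n) * n" by (metis add.commute diff_add_cancel minus_mod_eq_div_mult add_0 diff_zero)
  then show ?thesis using lev_per by metis
qed

lemma even_mod_NN: "even x \<Longrightarrow> even (x mod NN)"
proof -
  assume "even x"
  have "x mod NN = x - (x div NN) * NN" by (simp add: minus_div_mult_eq_mod)
  then show ?thesis using NN_even \<open>even x\<close> by simp
qed

lemma align_blk:
  assumes ev: "even (lev (a + int r) - lev (b - int r))"
  shows "alignment r n \<sigma> \<sigma>' (a, b) = blk (lev (b - int r) + ((lev (a + int r) - lev (b - int r)) mod NN) div 2)"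
proof -
  define A where "A = lev (b - int r)"
  define B where "B = lev (a + int r)"
  define m where "m = ((B - A) mod NN) div 2"
  have L: "f_left r n \<sigma> (a, b) = blk A" unfolding f_left_def A_def using bc_blk by simp
  have R: "f_right r n \<sigma> (a, b) = blk B" unfolding f_right_def B_def using bc_blk by simp
  have evm: "even ((B - A) mod NN)" using even_mod_NN ev unfolding A_def B_def by blast
  then have m2: "(B - A) mod NN = 2 * m" unfolding m_def by simp
  have "0 \<le> (B - A) mod NN" "(B - A) mod NN < NN" using NN_pos by auto
  then have mr: "0 \<le> m" "2 * m < NN" using m2 by auto
  have "alignment r n \<sigma> \<sigma>' (a, b) = middle_block n (fst (blk A)) (block_interval n \<sigma> (blk A) (blk B))"
    unfolding alignment_def Let_def L R ..
  also have "\<dots> = middle_block n (fst (blk A)) (blk ` {A .. A + 2 * m})"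
    unfolding block_interval_blk m2 ..
  also have "\<dots> = blk (A + m)" by (rule middle_blk[OF mr])
  finally show ?thesis unfolding m_def A_def B_def .
qed

end


theorem claim14:
  fixes r :: nat and n :: int and \<sigma> \<sigma>' :: "int \<Rightarrow> nat"
    and a b c d a' b' c' d' :: int
  assumes "r \<ge> 1" and "n \<ge> 1"
    and "\<forall>i \<in> {0..<n}. \<sigma> i \<in> {0, 1}" and "\<forall>i \<in> {0..<n}. \<sigma>' i \<in> {0, 1}"
    and "temporally_periodic_pair r n \<sigma> \<sigma>'"
    and "(a, b) \<in> blocks n \<sigma>'" and "(c, d) \<in> blocks n \<sigma>'"
    and "c = (b + 1) mod n"
    and "alignment r n \<sigma> \<sigma>' (a, b) = (a', b')"
    and "alignment r n \<sigma> \<sigma>' (c, d) = (c', d')"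
  shows "(a', b') \<in> blocks n \<sigma> \<and> (c', d') \<in> blocks n \<sigma> \<and> c' = (b' + 1) mod n"
proof -
  have n1: "n \<ge> 1" by (rule assms(2))
  have T1: "\<forall>i\<in>{0..<n}. maj r n \<sigma> i = \<sigma>' i" and T2: "\<forall>i\<in>{0..<n}. maj r n \<sigma>' i = \<sigma> i"
    using assms(5) unfolding temporally_periodic_pair_def by auto
  have H1: "\<forall>i. \<sigma>' (i mod n) = maj r n \<sigma> i"
  proof
    fix i
    have "i mod n \<in> {0..<n}" using n1 by simp
    then have "\<sigma>' (i mod n) = maj r n \<sigma> (i mod n)" using T1 by simp
    then show "\<sigma>' (i mod n) = maj r n \<sigma> i" using maj_mod by simp
  qed
  have H2: "\<forall>i. \<sigma> (i mod n) = maj r n \<sigma>' i"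
  proof
    fix i
    have "i mod n \<in> {0..<n}" using n1 by simp
    then have "\<sigma> (i mod n) = maj r n \<sigma>' (i mod n)" using T2 by simp
    then show "\<sigma> (i mod n) = maj r n \<sigma>' i" using maj_mod by simp
  qed
  have vs: "\<forall>x. \<sigma> (x mod n) \<in> {0,1}"
  proof
    fix x have "x mod n \<in> {0..<n}" using n1 by simp
    then show "\<sigma> (x mod n) \<in> {0,1}" using assms(3) by blast
  qed
  have vt: "\<forall>x. \<sigma>' (x mod n) \<in> {0,1}"
  proof
    fix x have "x mod n \<in> {0..<n}" using n1 by simp
    then show "\<sigma>' (x mod n) \<in> {0,1}" using assms(4) by blast
  qed
  interpret C: cyc n \<sigma> using n1 assms(3) by unfold_locales auto
  have sgd: "\<And>x. C.sg x = \<sigma> (x mod n)" by (rule C.sg_def)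

  obtain \<beta> where \<beta>: "\<beta> \<in> {0,1}" "0 \<le> a" "a < n" "0 \<le> b" "b < n"
    "\<forall>x. a \<le> x \<and> x \<le> a + (b - a) mod n \<longrightarrow> \<sigma>' (x mod n) = \<beta>"
    "\<sigma>' ((a - 1) mod n) \<noteq> \<beta>" "\<sigma>' ((a + (b - a) mod n + 1) mod n) \<noteq> \<beta>"
    using run_of_block[OF n1 assms(4) assms(6)] by blast
  define p where "p = a - 1"
  define q where "q = a + (b - a) mod n"
  have "0 \<le> (b - a) mod n" using n1 by simp
  then have pq: "p < q" unfolding p_def q_def by simp
  have runX: "\<forall>x. p < x \<and> x \<le> q \<longrightarrow> \<sigma>' (x mod n) = \<beta>" using \<beta>(6) unfolding p_def q_def by auto
  note FX = run_facts[OF H1 H2 vs vt \<beta>(1) pq runX \<beta>(7)[folded p_def] \<beta>(8)[folded q_def]]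

  obtain \<gamma> where \<gamma>: "\<gamma> \<in> {0,1}" "0 \<le> c" "c < n" "0 \<le> d" "d < n"
    "\<forall>x. c \<le> x \<and> x \<le> c + (d - c) mod n \<longrightarrow> \<sigma>' (x mod n) = \<gamma>"
    "\<sigma>' ((c - 1) mod n) \<noteq> \<gamma>" "\<sigma>' ((c + (d - c) mod n + 1) mod n) \<noteq> \<gamma>"
    using run_of_block[OF n1 assms(4) assms(7)] by blast
  define p' where "p' = c - 1"
  define q' where "q' = c + (d - c) mod n"
  have "0 \<le> (d - c) mod n" using n1 by simp
  then have pq': "p' < q'" unfolding p'_def q'_def by simp
  have runY: "\<forall>x. p' < x \<and> x \<le> q' \<longrightarrow> \<sigma>' (x mod n) = \<gamma>" using \<gamma>(6) unfolding p'_def q'_def by auto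
  note FY = run_facts[OF H1 H2 vs vt \<gamma>(1) pq' runY \<gamma>(7)[folded p'_def] \<gamma>(8)[folded q'_def]]

  have "\<exists>k. C.bd k"
    using C.run_bd[of p "int r" \<beta> q] FX pq unfolding sgd by blast
  then interpret D: cycb n \<sigma> by unfold_locales

  have LX: "D.lev (q + int r + 1) = D.lev (p + int r + 1) + 1" "even (D.lev (p + int r + 1) - D.lev (q - int r))"
    using D.run_levels[of p q "int r" \<beta>] FX pq unfolding sgd by auto
  have LY: "D.lev (q' - int r) = D.lev (p' - int r) + 1"
    using D.run_levels[of p' q' "int r" \<gamma>] FY pq' unfolding sgd by auto

  have qb: "q mod n = b"
  proof -
    have "q mod n = (a + (b - a)) mod n" unfolding q_def by (rule mod_add_right_eq)
    then show ?thesis using \<beta> by simp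
  qed
  have qd: "q' mod n = d"
  proof -
    have "q' mod n = (c + (d - c)) mod n" unfolding q'_def by (rule mod_add_right_eq)
    then show ?thesis using \<gamma> by simp
  qed
  have pq_mod: "p' mod n = q mod n"
  proof -
    have "p' mod n = ((b + 1) mod n - 1) mod n" unfolding p'_def assms(8) ..
    also have "\<dots> = (b + 1 - 1) mod n" by (rule mod_diff_left_eq)
    finally show ?thesis using qb \<beta> by simp
  qed
  have m1: "(b - int r) mod n = (q - int r) mod n" using qb by (metis mod_diff_left_eq mod_mod_trivial)
  have m2: "(q - int r) mod n = (p' - int r) mod n" using pq_mod by (metis mod_diff_left_eq)
  have m3: "(q' - int r) mod n = (d - int r) mod n" using qd by (metis mod_diff_left_eq mod_mod_trivial)
  have m4: "(q + int r + 1) mod n = (p' + int r + 1) mod n" using pq_mod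
    by (metis mod_add_left_eq add.assoc)
  obtain k1 where k1: "D.lev (q - int r) = D.lev (b - int r) + k1 * D.NN" using D.lev_cong[OF m1] by blast
  obtain k2 where k2: "D.lev (p' - int r) = D.lev (q - int r) + k2 * D.NN" using D.lev_cong[OF m2] by blast
  obtain k3 where k3: "D.lev (d - int r) = D.lev (q' - int r) + k3 * D.NN" using D.lev_cong[OF m3] by blast
  obtain k4 where k4: "D.lev (p' + int r + 1) = D.lev (q + int r + 1) + k4 * D.NN" using D.lev_cong[OF m4] by blast
  have ar: "a + int r = p + int r + 1" unfolding p_def by simp
  have cr: "c + int r = p' + int r + 1" unfolding p'_def by simp

  define \<Delta> where "\<Delta> = D.lev (a + int r) - D.lev (b - int r)"
  define \<Delta>' where "\<Delta>' = D.lev (c + int r) - D.lev (d - int r)"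
  define K where "K = k1 + k2 + k3"
  have ldr: "D.lev (d - int r) = D.lev (b - int r) + 1 + K * D.NN"
    unfolding K_def using k1 k2 k3 LY by (simp add: algebra_simps)
  have lcr: "D.lev (c + int r) = D.lev (a + int r) + 1 + k4 * D.NN"
    unfolding cr ar using k4 LX(1) by simp
  have D': "\<Delta>' = \<Delta> + (k4 - K) * D.NN" unfolding \<Delta>'_def \<Delta>_def ldr lcr by (simp add: algebra_simps)
  have evX: "even \<Delta>"
  proof -
    have "\<Delta> = (D.lev (p + int r + 1) - D.lev (q - int r)) + k1 * D.NN" unfolding \<Delta>_def ar using k1 by simp
    then show ?thesis using LX(2) D.NN_even by simp
  qed
  have evY: "even \<Delta>'" unfolding D' using evX D.NN_even by simp
  have modeq: "\<Delta>' mod D.NN = \<Delta> mod D.NN" unfolding D' by simp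
  define T where "T = D.lev (b - int r) + (\<Delta> mod D.NN) div 2"
  have AX: "alignment r n \<sigma> \<sigma>' (a, b) = D.blk T"
    unfolding T_def using D.align_blk[of a r b] evX unfolding \<Delta>_def by simp
  have AY: "alignment r n \<sigma> \<sigma>' (c, d) = D.blk (T + 1)"
  proof -
    have "alignment r n \<sigma> \<sigma>' (c, d) = D.blk (D.lev (d - int r) + (\<Delta>' mod D.NN) div 2)"
      using D.align_blk[of c r d] evY unfolding \<Delta>'_def by simp
    also have "D.lev (d - int r) + (\<Delta>' mod D.NN) div 2 = (T + 1) + K * D.NN"
      unfolding ldr modeq T_def by simp
    also have "D.blk \<dots> = D.blk (T + 1)" by (rule D.blk_shift)
    finally show ?thesis .
  qed
  have ab': "(a', b') = D.blk T" using AX assms(9) by simp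
  have cd': "(c', d') = D.blk (T + 1)" using AY assms(10) by simp
  have c1: "(a', b') \<in> blocks n \<sigma>" using ab' D.blk_in by simp
  have c2: "(c', d') \<in> blocks n \<sigma>" using cd' D.blk_in by simp
  have "c' = (D.e T + 1) mod n" using cd' unfolding D.blk_def by simp
  moreover have "b' = D.e T mod n" using ab' unfolding D.blk_def by simp
  ultimately have c3: "c' = (b' + 1) mod n" by (simp add: mod_add_left_eq)
  show ?thesis using c1 c2 c3 by simp
qed

end
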